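(* Let $p$ be a prime and let $\theta\in\mathbb{F}_p((X^{-1}))$ be a counterexample to the $X$-adic Littlewood conjecture over $\mathbb{F}_p$ with finite deficiency $D(\theta)\in\mathbb{N}_0$, i.e. for every $r\ge0$ all partial quotients $A^{(r)}_j$ of the simple continued fraction expansion of $\langle X^r\theta\rangle$ satisfy $\deg(A^{(r)}_j)\le D(\theta)+1$. Then for every $m>D(\theta)$ the digital $(D(\theta),m,3)$-net $(\boldsymbol{x}_n)_{0\le n<p^m}$ over $\mathbb{F}_p$ generated by $I^{(m)}$, $H^{(m)}(\theta)$ and $J^{(m)}$ is $(D(\theta)+3)$-admissible, i.e. $$\min_{0\le k<n<p^m}\|\boldsymbol{x}_k\ominus\boldsymbol{x}_n\|_p>p^{-m-D(\theta)-3}.$$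
   Context: $\mathbb{F}_p((X^{-1}))$ is the field of formal Laurent series $\theta=\sum_{i=j}^\infty a_iX^{-i}$ over $\mathbb{F}_p$, with $|\theta|=2^{-j}$ for $a_j\ne0$, fractional part $\langle\theta\rangle=\sum_{i\ge\max\{1,j\}}a_iX^{-i}$, $\|\theta\|=|\langle\theta\rangle|$; $\theta$ is a counterexample to the $X$-adic Littlewood conjecture if $\inf_{r\ge0,Q\in\mathbb{F}_p[X]\setminus\{0\}}|Q|\cdot\|X^rQ\theta\|>0$. Matrices (rows indexed by $1,2,\dots$, columns by $0,\dots,m-1$): $I^{(m)}$ has entry $1$ in row $k$, column $k-1$, else $0$; $H^{(m)}(\theta)$ has entry $a_{k+l}$ in row $k$, column $l$ (with $a_i=0$ for $1\le i<j$); $J^{(m)}$ has entry $1$ in row $k$, column $m-k$ for $1\le k\le m$, else $0$. Point set: for $0\le n<p^m$ with base-$p$ digit vector $\vec n=(n_0,\dots,n_{m-1})^T$, $C_i\vec n=(y^{(i)}_1,y^{(i)}_2,\dots)^T$ mod $p$ ($C_1=I^{(m)},C_2=H^{(m)}(\theta),C_3=J^{(m)}$), $x^{(i)}_n=\sum_k y^{(i)}_kp^{-k}$, $\boldsymbol{x}_n=(x^{(1)}_n,x^{(2)}_n,x^{(3)}_n)$. For $\boldsymbol{x}=(x^{(1)},x^{(2)},x^{(3)})$ with digit expansions $x^{(i)}=\sum_{j\ge1}x^{(i)}_jp^{-j}$, $\|\boldsymbol{x}\|_p=p^{-l}$ with $l=\sum_{i=1}^3\min\{j\in\mathbb{N}:x^{(i)}_j\neq0\}$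 (minimum of the empty set being $\infty$, so $\|\boldsymbol{x}\|_p=0$ if some coordinate is $0$). $\ominus$ is componentwise digit-wise subtraction modulo $p$: $x^{(i)}_k\ominus x^{(i)}_n=\sum_{j\ge1}\big((x^{(i)}_{k,j}-x^{(i)}_{n,j})\bmod p\big)p^{-j}$. *)

theory Defs
  imports "HOL-Computational_Algebra.Formal_Laurent_Series" "Berlekamp_Zassenhaus.Finite_Field"
begin

text \<open>Laurent series in X^{-1} over F_p are modelled as 'a fls in the variable T = X^{-1}:
  theta = sum_i a_i X^{-i} corresponds to the fls with (theta $$ i) = a_i.\<close>

definition fls_abs :: "'a::zero fls \<Rightarrow> real" where
  "fls_abs f = (if f = 0 then 0 else 2 powr (- real_of_int (fls_subdegree f)))"

text \<open>fractional part: keep the coefficients of X^{-i}, i >= 1\<close>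
definition fls_frac :: "'a::zero fls \<Rightarrow> 'a fls" where
  "fls_frac f = fls_shift (-1) (fps_to_fls (fls_regpart (fls_shift 1 f)))"

definition fls_dist_int :: "'a::zero fls \<Rightarrow> real" where
  "fls_dist_int f = fls_abs (fls_frac f)"

text \<open>polynomial (integral) part, as a polynomial in X\<close>
definition fls_intpart :: "'a::zero fls \<Rightarrow> 'a poly" where
  "fls_intpart f = Polynomial.Poly (map (\<lambda>k. fls_nth f (- int k)) [0..<nat (- fls_subdegree f) + 1])"

definition poly_to_fls :: "'a::comm_ring_1 poly \<Rightarrow> 'a fls" where
  "poly_to_fls Q = (\<Sum>k\<le>Polynomial.degree Q. fls_const (Polynomial.coeff Q k) * fls_X_inv ^ k)"

definition poly_abs :: "'a::zero poly \<Rightarrow> real" where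
  "poly_abs Q = (if Q = 0 then 0 else 2 ^ Polynomial.degree Q)"

definition XadicLC_counterexample :: "'a::field fls \<Rightarrow> bool" where
  "XadicLC_counterexample \<theta> \<longleftrightarrow>
     (INF rQ \<in> {(r::nat, Q::'a poly). Q \<noteq> 0}.
        poly_abs (snd rQ) * fls_dist_int (fls_X_inv ^ fst rQ * poly_to_fls (snd rQ) * \<theta>)) > 0"

text \<open>continued fraction expansion of phi (with |phi| < 1): complete-quotient remainders
  phi_0 = phi, phi_{n+1} = <1/phi_n>; partial quotient A_{n+1} = integral part of 1/phi_n,
  defined as long as phi_n is nonzero.\<close>
fun cf_rem :: "'a::field fls \<Rightarrow> nat \<Rightarrow> 'a fls" where
  "cf_rem \<phi> 0 = \<phi>"
| "cf_rem \<phi> (Suc n) = fls_frac (inverse (cf_rem \<phi> n))"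

definition cf_exists :: "'a::field fls \<Rightarrow> nat \<Rightarrow> bool" where
  "cf_exists \<phi> j \<longleftrightarrow> 1 \<le> j \<and> cf_rem \<phi> (j - 1) \<noteq> 0"

definition cf_pq :: "'a::field fls \<Rightarrow> nat \<Rightarrow> 'a poly" where
  "cf_pq \<phi> j = fls_intpart (inverse (cf_rem \<phi> (j - 1)))"

definition deficiency_bound :: "'a::field fls \<Rightarrow> nat \<Rightarrow> bool" where
  "deficiency_bound \<theta> D \<longleftrightarrow>
     (\<forall>r::nat. \<forall>j. cf_exists (fls_frac (fls_X_inv ^ r * \<theta>)) j \<longrightarrow>
        Polynomial.degree (cf_pq (fls_frac (fls_X_inv ^ r * \<theta>)) j) \<le> D + 1)"

text \<open>generating matrices, rows k = 1,2,..., columns l = 0..m-1\<close>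
definition I_mat :: "nat \<Rightarrow> nat \<Rightarrow> nat \<Rightarrow> 'a::{zero,one}" where
  "I_mat m k l = (if l < m \<and> k = l + 1 then 1 else 0)"

definition H_mat :: "nat \<Rightarrow> 'a::zero fls \<Rightarrow> nat \<Rightarrow> nat \<Rightarrow> 'a" where
  "H_mat m \<theta> k l = (if 1 \<le> k \<and> l < m then fls_nth \<theta> (int (k + l)) else 0)"

definition J_mat :: "nat \<Rightarrow> nat \<Rightarrow> nat \<Rightarrow> 'a::{zero,one}" where
  "J_mat m k l = (if 1 \<le> k \<and> k \<le> m \<and> l = m - k then 1 else 0)"

definition pdigit :: "nat \<Rightarrow> nat \<Rightarrow> nat \<Rightarrow> nat" where
  "pdigit p n l = n div p ^ l mod p"

definition gen_digits :: "nat \<Rightarrow> (nat \<Rightarrow> nat \<Rightarrow> 'p::prime_card mod_ring) \<Rightarrow> nat \<Rightarrow> nat \<Rightarrow> 'p mod_ring" where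
  "gen_digits m C n k = (\<Sum>l<m. C k l * of_nat (pdigit CARD('p) n l))"

text \<open>a point of [0,1)^3 given by its digit expansions: x i j = j-th digit of coordinate i
  (i in {1,2,3}, j >= 1)\<close>
definition net_point :: "nat \<Rightarrow> 'p::prime_card mod_ring fls \<Rightarrow> nat \<Rightarrow> nat \<Rightarrow> nat \<Rightarrow> 'p mod_ring" where
  "net_point m \<theta> n i =
     (if i = 1 then gen_digits m (I_mat m) n
      else if i = 2 then gen_digits m (H_mat m \<theta>) n
      else gen_digits m (J_mat m) n)"

definition digit_ominus :: "(nat \<Rightarrow> nat \<Rightarrow> 'a::ab_group_add) \<Rightarrow> (nat \<Rightarrow> nat \<Rightarrow> 'a) \<Rightarrow> nat \<Rightarrow> nat \<Rightarrow> 'a" where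
  "digit_ominus x y i j = x i j - y i j"

definition p_norm :: "nat \<Rightarrow> (nat \<Rightarrow> nat \<Rightarrow> 'a::zero) \<Rightarrow> real" where
  "p_norm p x =
     (if \<exists>i\<in>{1,2,3::nat}. \<forall>j\<ge>1. x i j = 0 then 0
      else 1 / real p ^ (\<Sum>i\<in>{1,2,3::nat}. LEAST j. 1 \<le> j \<and> x i j \<noteq> 0))"

end

theory Submission
  imports Defs
begin
unbundle fps_syntax

definition ispoly :: "'a::zero fls \<Rightarrow> bool" where
  "ispoly f \<longleftrightarrow> (\<forall>k>0. f $$ k = 0)"

lemma frac_nth: "fls_frac f $$ k = (if 1 \<le> k then f $$ k else 0)"
  unfolding fls_frac_def by auto

lemma ispoly_ipart: "ispoly (f - fls_frac (f::'a::ab_group_add fls))"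
  unfolding ispoly_def by (auto simp: frac_nth)

lemma ispoly_add: "ispoly f \<Longrightarrow> ispoly g \<Longrightarrow> ispoly (f + (g::'a::monoid_add fls))"
  unfolding ispoly_def by auto

lemma ispoly_diff: "ispoly f \<Longrightarrow> ispoly g \<Longrightarrow> ispoly (f - (g::'a::ab_group_add fls))"
  unfolding ispoly_def by auto

lemma ispoly_1: "ispoly (1::'a::{zero,one} fls)"
  unfolding ispoly_def by auto

lemma ispoly_mult: "ispoly f \<Longrightarrow> ispoly g \<Longrightarrow> ispoly (f * (g::'a::comm_ring_1 fls))"
  unfolding ispoly_def
proof (intro allI impI)
  fix k :: int assume f: "\<forall>k>0. f $$ k = 0" and g: "\<forall>k>0. g $$ k = 0" and k: "k > 0"
  have "(f * g) $$ k = (\<Sum>i=fls_subdegree f..k - fls_subdegree g. f $$ i * g $$ (k - i))"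
    by (rule fls_times_nth(2))
  also have "\<dots> = 0"
  proof (intro sum.neutral ballI)
    fix i assume "i \<in> {fls_subdegree f..k - fls_subdegree g}"
    show "f $$ i * g $$ (k - i) = 0"
      using f g k by (cases "i > 0") auto
  qed
  finally show "(f * g) $$ k = 0" .
qed

lemma ispoly_iff_frac: "ispoly f \<longleftrightarrow> fls_frac (f::'a::zero fls) = 0"
  unfolding ispoly_def fls_eq_iff by (auto simp: frac_nth)

lemma frac_add_poly: "ispoly g \<Longrightarrow> fls_frac (f + g) = fls_frac (f::'a::monoid_add fls)"
  unfolding ispoly_def by (intro fls_eqI) (auto simp: frac_nth)

lemma frac_subdeg: "fls_frac f \<noteq> 0 \<Longrightarrow> 1 \<le> fls_subdegree (fls_frac f)"
  by (intro fls_subdegree_geI) (auto simp: frac_nth)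

lemma poly_subdeg: "ispoly f \<Longrightarrow> f \<noteq> 0 \<Longrightarrow> fls_subdegree f \<le> 0"
  unfolding ispoly_def using nth_fls_subdegree_nonzero by force

lemma core:
  fixes \<phi> :: "nat \<Rightarrow> 'a::field fls" and E :: nat
  assumes nz: "\<And>n. \<phi> n \<noteq> 0"
    and sub: "\<And>n. 1 \<le> fls_subdegree (\<phi> n)"
    and rec: "\<And>n. \<phi> (Suc n) = fls_frac (inverse (\<phi> n))"
    and bnd: "\<And>n. fls_subdegree (\<phi> n) \<le> int E"
  shows "ispoly Q \<Longrightarrow> Q \<noteq> 0 \<Longrightarrow> fls_frac (Q * \<phi> n) \<noteq> 0 \<and>
          fls_subdegree (fls_frac (Q * \<phi> n)) \<le> int E - fls_subdegree Q"
proof (induction "nat (- fls_subdegree Q)" arbitrary: Q n rule: less_induct)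
  case less
  define f where "f = \<phi> n"
  define A where "A = inverse f - \<phi> (Suc n)"
  define P where "P = Q * f - fls_frac (Q * f)"
  have fnz: "f \<noteq> 0" using nz f_def by simp
  have vf1: "1 \<le> fls_subdegree f" and vfE: "fls_subdegree f \<le> int E" using sub bnd f_def by auto
  have vQ: "fls_subdegree Q \<le> 0" using poly_subdeg less.prems by auto
  have Apoly: "ispoly A" unfolding A_def rec f_def by (rule ispoly_ipart)
  have Ppoly: "ispoly P" unfolding P_def by (rule ispoly_ipart)
  have Qf: "Q * f \<noteq> 0" using fnz less.prems by simp
  have vQf: "fls_subdegree (Q * f) = fls_subdegree Q + fls_subdegree f"
    using fnz less.prems by simp
  show ?case
  proof (cases "P = 0")
    case True
    hence "fls_frac (Q * f) = Q * f" unfolding P_def by simp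
    thus ?thesis using Qf vQf vQ vfE f_def by simp
  next
    case False
    have vP0: "fls_subdegree P \<le> 0" using poly_subdeg Ppoly False by auto
    have dec: "Q * f = P + fls_frac (Q * f)" unfolding P_def by simp
    have "fls_subdegree (Q * f) = fls_subdegree P"
    proof (cases "fls_frac (Q * f) = 0")
      case True then show ?thesis using dec by simp
    next
      case F: False
      have "fls_subdegree P < fls_subdegree (fls_frac (Q * f))"
        using frac_subdeg[OF F] vP0 by simp
      from fls_subdegree_add_eq1[OF False this] show ?thesis using dec by metis
    qed
    hence vP: "fls_subdegree P = fls_subdegree Q + fls_subdegree f" using vQf by simp
    have "nat (- fls_subdegree P) < nat (- fls_subdegree Q)" using vP vf1 vP0 by simp
    from less.hyps[OF this Ppoly False, of "Suc n"]
    have IH1: "fls_frac (P * \<phi> (Suc n)) \<noteq> 0"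
      and IH2: "fls_subdegree (fls_frac (P * \<phi> (Suc n))) \<le> int E - fls_subdegree P" by auto
    define R where "R = P * \<phi> (Suc n) - (Q - P * A)"
    define S where "S = (P * \<phi> (Suc n) - fls_frac (P * \<phi> (Suc n))) - (Q - P * A)"
    have Spoly: "ispoly S" unfolding S_def
      by (intro ispoly_diff ispoly_ipart ispoly_mult less.prems Ppoly Apoly)
    have RS: "R = fls_frac (P * \<phi> (Suc n)) + S" unfolding R_def S_def by simp
    define k where "k = fls_subdegree (fls_frac (P * \<phi> (Suc n)))"
    have k1: "1 \<le> k" unfolding k_def using frac_subdeg[OF IH1] .
    have "R $$ k \<noteq> 0"
      using RS Spoly k1 unfolding ispoly_def k_def
      using IH1 nth_fls_subdegree_nonzero by (metis add.right_neutral fls_plus_nth zero_less_one_class.zero_less_one order_less_le_trans)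
    hence Rnz: "R \<noteq> 0" and vR: "fls_subdegree R \<le> k" by (auto intro: fls_subdegree_leI)
    have "f * R = P - Q * f"
    proof -
      have "f * R = f * P * (\<phi> (Suc n) + A) - f * Q" unfolding R_def by (simp add: algebra_simps)
      also have "\<phi> (Suc n) + A = inverse f" unfolding A_def by simp
      finally show ?thesis using fnz by (simp add: algebra_simps)
    qed
    hence fr: "fls_frac (Q * f) = - (f * R)" unfolding P_def by (simp add: algebra_simps)
    show ?thesis
      using fr fnz Rnz vR IH2 vP f_def k_def by simp
  qed
qed


lemma rat_back:
  fixes \<phi> :: "nat \<Rightarrow> 'a::field fls"
  assumes rec: "\<And>n. \<phi> (Suc n) = fls_frac (inverse (\<phi> n))"
    and z: "\<phi> N = 0"
  shows "j \<le> N \<Longrightarrow> \<exists>Q. ispoly Q \<and> Q \<noteq> 0 \<and> ispoly (Q * \<phi> (N - j))"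
proof (induction j)
  case 0 then show ?case using z by (intro exI[of _ 1]) (auto simp: ispoly_1 ispoly_def)
next
  case (Suc j)
  then obtain Q' where Q': "ispoly Q'" "Q' \<noteq> 0" "ispoly (Q' * \<phi> (N - j))" by auto
  define k where "k = N - Suc j"
  have Nj: "N - j = Suc k" using Suc.prems k_def by simp
  show ?case
  proof (cases "\<phi> k = 0")
    case True then show ?thesis unfolding k_def[symmetric]
      by (intro exI[of _ 1]) (auto simp: ispoly_1 ispoly_def)
  next
    case False
    define A where "A = inverse (\<phi> k) - \<phi> (Suc k)"
    have Apoly: "ispoly A" unfolding A_def rec by (rule ispoly_ipart)
    define P where "P = Q' * \<phi> (Suc k) + Q' * A"
    have Pe: "P = Q' * inverse (\<phi> k)" unfolding P_def A_def by (simp add: algebra_simps)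
    have "ispoly P" unfolding P_def
      by (rule ispoly_add) (use Q' Nj Apoly ispoly_mult in auto)
    moreover have "P \<noteq> 0" using Pe Q' False by simp
    moreover have "P * \<phi> k = Q'" using Pe False by simp
    ultimately show ?thesis using Q' unfolding k_def[symmetric] by auto
  qed
qed

lemma poly_to_fls_nth: "poly_to_fls P $$ i = (if i \<le> 0 then Polynomial.coeff P (nat (-i)) else 0)"
proof -
  have "poly_to_fls P $$ i = (\<Sum>k\<le>degree P. (if i \<le> 0 \<and> k = nat (-i) then Polynomial.coeff P k else 0))"
    unfolding poly_to_fls_def fls_nth_sum
    by (intro sum.cong) auto
  also have "\<dots> = (if i \<le> 0 then Polynomial.coeff P (nat (-i)) else 0)"
    by (auto simp: sum.delta coeff_eq_0)
  finally show ?thesis .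
qed

lemma intpart_coeff: "Polynomial.coeff (fls_intpart f) j = (if j \<le> nat (- fls_subdegree f) then f $$ (- int j) else 0)"
  unfolding fls_intpart_def coeff_Poly by (auto simp del: upt_Suc simp: nth_default_def)

lemma intpart_coeff': "Polynomial.coeff (fls_intpart f) j = f $$ (- int j)"
proof (cases "j \<le> nat (- fls_subdegree f)")
  case False
  hence "- int j < fls_subdegree f" by simp
  then show ?thesis by (simp add: intpart_coeff False fls_eq0_below_subdegree)
qed (simp add: intpart_coeff)

lemma poly_to_fls_intpart: "ispoly f \<Longrightarrow> poly_to_fls (fls_intpart f) = f"
  unfolding ispoly_def by (intro fls_eqI) (auto simp: poly_to_fls_nth intpart_coeff')

lemma degree_intpart: "f \<noteq> 0 \<Longrightarrow> fls_subdegree f \<le> 0 \<Longrightarrow> nat (- fls_subdegree f) \<le> Polynomial.degree (fls_intpart f)"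
  by (rule le_degree) (simp add: intpart_coeff')


lemma cf_setup:
  fixes \<theta> :: "'a::field fls"
  assumes X: "XadicLC_counterexample \<theta>" and Db: "deficiency_bound \<theta> D"
    and Q: "ispoly Q" "Q \<noteq> 0"
  shows "fls_frac (Q * fls_frac (fls_X_inv ^ r * \<theta>)) \<noteq> 0 \<and>
         fls_subdegree (fls_frac (Q * fls_frac (fls_X_inv ^ r * \<theta>))) \<le> int (D + 1) - fls_subdegree Q"
proof -
  define \<phi> where "\<phi> = cf_rem (fls_frac (fls_X_inv ^ r * \<theta>))"
  have rec: "\<And>n. \<phi> (Suc n) = fls_frac (inverse (\<phi> n))" unfolding \<phi>_def by simp
  have nz: "\<phi> n \<noteq> 0" for n
  proof
    assume z: "\<phi> n = 0"
    from rat_back[of \<phi> n, OF rec z, of n]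
    obtain Q0 where Q0: "ispoly Q0" "Q0 \<noteq> 0" "ispoly (Q0 * \<phi> 0)" by auto
    define Qp where "Qp = fls_intpart Q0"
    have pQ: "poly_to_fls Qp = Q0" unfolding Qp_def using Q0 poly_to_fls_intpart by blast
    have Qpnz: "Qp \<noteq> 0" using pQ Q0(2) by (auto simp: poly_to_fls_def)
    have "fls_frac (fls_X_inv ^ r * poly_to_fls Qp * \<theta>)
        = fls_frac (Q0 * \<phi> 0 + Q0 * (fls_X_inv ^ r * \<theta> - fls_frac (fls_X_inv ^ r * \<theta>)))"
      unfolding pQ \<phi>_def by (simp add: algebra_simps)
    also have "\<dots> = fls_frac (Q0 * \<phi> 0)"
      by (intro frac_add_poly ispoly_mult Q0 ispoly_ipart)
    also have "\<dots> = 0" using Q0(3) ispoly_iff_frac by blast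
    finally have zero: "poly_abs Qp * fls_dist_int (fls_X_inv ^ r * poly_to_fls Qp * \<theta>) = 0"
      by (simp add: fls_dist_int_def fls_abs_def)
    define S where "S = {(r::nat, Q::'a poly). Q \<noteq> 0}"
    define g where "g = (\<lambda>rQ::nat \<times> 'a poly. poly_abs (snd rQ) * fls_dist_int (fls_X_inv ^ fst rQ * poly_to_fls (snd rQ) * \<theta>))"
    have pos: "(INF rQ \<in> S. g rQ) > 0" using X unfolding XadicLC_counterexample_def S_def g_def by simp
    have bdd: "bdd_below (g ` S)"
      by (rule bdd_belowI[of _ 0]) (auto simp: g_def poly_abs_def fls_dist_int_def fls_abs_def)
    have "(INF rQ \<in> S. g rQ) \<le> g (r, Qp)"
      by (rule cINF_lower[OF bdd]) (simp add: S_def Qpnz)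
    also have "g (r, Qp) = 0" using zero by (simp add: g_def)
    finally show False using pos by simp
  qed
  have sub: "1 \<le> fls_subdegree (\<phi> n)" for n
    using nz[of n] by (cases n) (auto simp: \<phi>_def intro: frac_subdeg)
  have bnd: "fls_subdegree (\<phi> n) \<le> int (D + 1)" for n
  proof -
    have "cf_exists (fls_frac (fls_X_inv ^ r * \<theta>)) (Suc n)"
      using nz[of n] unfolding cf_exists_def \<phi>_def by simp
    with Db have "Polynomial.degree (cf_pq (fls_frac (fls_X_inv ^ r * \<theta>)) (Suc n)) \<le> D + 1"
      unfolding deficiency_bound_def by blast
    hence "Polynomial.degree (fls_intpart (inverse (\<phi> n))) \<le> D + 1"
      unfolding cf_pq_def \<phi>_def by simp
    moreover have "nat (- fls_subdegree (inverse (\<phi> n))) \<le> Polynomial.degree (fls_intpart (inverse (\<phi> n)))"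
      using nz[of n] sub[of n] by (intro degree_intpart) auto
    ultimately show ?thesis using sub[of n] by simp
  qed
  have "fls_frac (Q * \<phi> 0) \<noteq> 0 \<and> fls_subdegree (fls_frac (Q * \<phi> 0)) \<le> int (D + 1) - fls_subdegree Q"
    by (rule core[of \<phi> "D + 1", OF nz sub rec bnd Q])
  then show ?thesis unfolding \<phi>_def by simp
qed


lemma digits_differ:
  assumes "p > 0" shows "k < p ^ m \<Longrightarrow> n < p ^ m \<Longrightarrow> k \<noteq> n \<Longrightarrow> \<exists>l<m. pdigit p k l \<noteq> pdigit p n l"
proof (induction m arbitrary: k n)
  case 0 then show ?case by simp
next
  case (Suc m)
  show ?case
  proof (cases "k mod p = n mod p")
    case False then show ?thesis by (intro exI[of _ 0]) (auto simp: pdigit_def)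
  next
    case True
    have ne: "k div p \<noteq> n div p" using True Suc.prems(3) by (metis div_mult_mod_eq)
    have "k div p < p ^ m" using Suc.prems(1) by (metis less_mult_imp_div_less mult.commute power_Suc)
    moreover have "n div p < p ^ m" using Suc.prems(2) by (metis less_mult_imp_div_less mult.commute power_Suc)
    ultimately have "\<exists>l<m. pdigit p (k div p) l \<noteq> pdigit p (n div p) l" using Suc.IH ne by blast
    from this obtain l where "l < m" "pdigit p (k div p) l \<noteq> pdigit p (n div p) l" by auto
    then show ?thesis by (intro exI[of _ "Suc l"]) (auto simp: pdigit_def div_mult2_eq)
  qed
qed

lemma ofnat_eq: "(of_nat a :: 'p::nontriv mod_ring) = of_int_mod_ring (int a)"
proof -
  have "(of_nat :: nat \<Rightarrow> 'p mod_ring) = of_int_mod_ring o int" by (rule of_nat_of_int_mod_ring)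
  then show ?thesis by (metis comp_apply)
qed
lemma ofnat_inj:
  assumes "a < CARD('p)" "b < CARD('p)" "(of_nat a :: 'p::prime_card mod_ring) = of_nat b"
  shows "a = b"
proof -
  have "to_int_mod_ring (of_int_mod_ring (int a) :: 'p mod_ring) = int a"
    using assms(1) by (intro to_int_mod_ring_of_int_mod_ring) auto
  moreover have "to_int_mod_ring (of_int_mod_ring (int b) :: 'p mod_ring) = int b"
    using assms(2) by (intro to_int_mod_ring_of_int_mod_ring) auto
  ultimately show ?thesis using assms(3) ofnat_eq[of a] ofnat_eq[of b] by (metis of_nat_eq_iff)
qed


lemma pair_bound:
  fixes \<theta> :: "'p::prime_card mod_ring fls" and D m k n :: nat
  assumes X: "XadicLC_counterexample \<theta>" and Db: "deficiency_bound \<theta> D"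
    and kn: "k < n" "n < CARD('p) ^ m"
  shows "p_norm CARD('p) (digit_ominus (net_point m \<theta> k) (net_point m \<theta> n))
         > 1 / real CARD('p) ^ (m + D + 3)"
proof -
  define p where "p = CARD('p)"
  have p2: "p \<ge> 2" unfolding p_def using prime_card[where 'a='p] prime_ge_2_nat by blast
  define d :: "nat \<Rightarrow> 'p mod_ring" where "d l = of_nat (pdigit p k l) - of_nat (pdigit p n l)" for l
  define x where "x = digit_ominus (net_point m \<theta> k) (net_point m \<theta> n)"
  have x1: "x 1 j = (\<Sum>l<m. I_mat m j l * d l)" for j
    unfolding x_def digit_ominus_def net_point_def gen_digits_def d_def p_def
    by (simp add: sum_subtractf[symmetric] right_diff_distrib)
  have x2: "x 2 j = (\<Sum>l<m. H_mat m \<theta> j l * d l)" for j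
    unfolding x_def digit_ominus_def net_point_def gen_digits_def d_def p_def
    by (simp add: sum_subtractf[symmetric] right_diff_distrib)
  have x3: "x 3 j = (\<Sum>l<m. J_mat m j l * d l)" for j
    unfolding x_def digit_ominus_def net_point_def gen_digits_def d_def p_def
    by (simp add: sum_subtractf[symmetric] right_diff_distrib)
  define L where "L = {l. l < m \<and> d l \<noteq> 0}"
  have "k < p ^ m" using kn p_def by simp
  from digits_differ[OF _ this] kn p2 obtain l0 where l0: "l0 < m" "pdigit p k l0 \<noteq> pdigit p n l0"
    unfolding p_def by fastforce
  have "d l0 \<noteq> 0"
  proof
    assume "d l0 = 0"
    hence "(of_nat (pdigit p k l0) :: 'p mod_ring) = of_nat (pdigit p n l0)" unfolding d_def by simp
    moreover have "pdigit p k l0 < CARD('p)" "pdigit p n l0 < CARD('p)"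
      unfolding pdigit_def p_def using p2 p_def by auto
    ultimately show False using ofnat_inj l0(2) by blast
  qed
  hence Lne: "L \<noteq> {}" and Lfin: "finite L" using l0 unfolding L_def by auto
  define a where "a = Min L"
  define b where "b = Max L"
  have aL: "a \<in> L" and bL: "b \<in> L" unfolding a_def b_def using Lne Lfin by auto
  have da: "d a \<noteq> 0" and db: "d b \<noteq> 0" and bm: "b < m" using aL bL unfolding L_def by auto
  have ab: "a \<le> b" unfolding a_def b_def using Lne Lfin by auto
  have dout: "d l = 0" if "l < m" "l < a \<or> b < l" for l
  proof (rule ccontr)
    assume "d l \<noteq> 0" hence "l \<in> L" using that unfolding L_def by auto
    thus False using that Lfin unfolding a_def b_def by (meson Max_ge Min_le not_le)
  qed
  have c1: "x 1 (a + 1) \<noteq> 0"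
  proof -
    have "x 1 (a + 1) = (\<Sum>l<m. if l = a then d l else 0)"
      unfolding x1 by (intro sum.cong) (auto simp: I_mat_def)
    also have "\<dots> = d a" using ab bm by simp
    finally show ?thesis using da by simp
  qed
  have c3: "x 3 (m - b) \<noteq> 0"
  proof -
    have "x 3 (m - b) = (\<Sum>l<m. if l = b then d l else 0)"
      unfolding x3 using bm by (intro sum.cong) (auto simp: J_mat_def)
    also have "\<dots> = d b" using bm by simp
    finally show ?thesis using db by simp
  qed
  define Qf where "Qf = (\<Sum>l\<in>{a..b}. fls_const (d l) * fls_X_inv ^ (l - a))"
  define \<psi> where "\<psi> = fls_X_inv ^ a * \<theta>"
  have Qf_nth: "Qf $$ i = (\<Sum>l\<in>{a..b}. if i = - int (l - a) then d l else 0)" for i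
    unfolding Qf_def fls_nth_sum by (intro sum.cong) auto
  have Qfpoly: "ispoly Qf" unfolding ispoly_def Qf_nth by auto
  have "Qf $$ 0 = d a"
  proof -
    have "Qf $$ 0 = (\<Sum>l\<in>{a..b}. if l = a then d l else 0)"
      unfolding Qf_nth by (intro sum.cong) auto
    also have "\<dots> = d a" using ab by simp
    finally show ?thesis .
  qed
  hence Qfnz: "Qf \<noteq> 0" using da by auto
  have vQf: "int a - int b \<le> fls_subdegree Qf"
    by (intro fls_subdegree_geI Qfnz) (auto simp: Qf_nth intro!: sum.neutral)
  have prod: "(Qf * \<psi>) $$ j = (\<Sum>l\<in>{a..b}. d l * \<theta> $$ (j + int l))" for j
  proof -
    have "Qf * \<psi> = (\<Sum>l\<in>{a..b}. fls_const (d l) * fls_shift (int l) \<theta>)"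
      unfolding Qf_def \<psi>_def sum_distrib_right
    proof (intro sum.cong refl)
      fix l assume "l \<in> {a..b}"
      hence "fls_X_inv ^ (l - a) * (fls_X_inv ^ a * \<theta>) = fls_X_inv ^ l * \<theta>"
        by (simp add: mult.assoc[symmetric] power_add[symmetric])
      thus "fls_const (d l) * fls_X_inv ^ (l - a) * (fls_X_inv ^ a * \<theta>) = fls_const (d l) * fls_shift (int l) \<theta>"
        by (simp only: mult.assoc fls_X_inv_power_times_conv_shift(1))
    qed
    thus ?thesis by (simp add: fls_nth_sum)
  qed
  have H: "x 2 j = (Qf * \<psi>) $$ int j" if "1 \<le> j" for j
  proof -
    have "x 2 j = (\<Sum>l<m. d l * \<theta> $$ (int j + int l))"
      unfolding x2 using that by (intro sum.cong) (auto simp: H_mat_def)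
    also have "\<dots> = (\<Sum>l\<in>{a..b}. d l * \<theta> $$ (int j + int l))"
      using bm dout by (intro sum.mono_neutral_right) auto
    finally show ?thesis using prod by simp
  qed
  from cf_setup[OF X Db Qfpoly Qfnz, of a]
  have F: "fls_frac (Qf * fls_frac \<psi>) \<noteq> 0"
    "fls_subdegree (fls_frac (Qf * fls_frac \<psi>)) \<le> int (D + 1) - fls_subdegree Qf"
    unfolding \<psi>_def by auto
  have "fls_frac (Qf * \<psi>) = fls_frac (Qf * fls_frac \<psi> + Qf * (\<psi> - fls_frac \<psi>))"
    by (simp add: algebra_simps)
  also have "\<dots> = fls_frac (Qf * fls_frac \<psi>)"
    by (intro frac_add_poly ispoly_mult Qfpoly ispoly_ipart)
  finally have FF: "fls_frac (Qf * \<psi>) = fls_frac (Qf * fls_frac \<psi>)" .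
  define v where "v = fls_subdegree (fls_frac (Qf * \<psi>))"
  have v1: "1 \<le> v" unfolding v_def FF using frac_subdeg[OF F(1)] .
  have vle: "v \<le> int D + 1 + int b - int a" using F(2) vQf unfolding v_def FF by simp
  have c2: "x 2 (nat v) \<noteq> 0"
  proof -
    have "x 2 (nat v) = (Qf * \<psi>) $$ v" using H[of "nat v"] v1 by simp
    also have "\<dots> = fls_frac (Qf * \<psi>) $$ v" using v1 by (simp add: frac_nth)
    also have "\<dots> \<noteq> 0" unfolding v_def using F(1) FF by (simp add: nth_fls_subdegree_nonzero)
    finally show ?thesis .
  qed
  have l1: "(LEAST j. 1 \<le> j \<and> x 1 j \<noteq> 0) \<le> a + 1" using c1 by (intro Least_le) auto
  have l2: "(LEAST j. 1 \<le> j \<and> x 2 j \<noteq> 0) \<le> nat v" using c2 v1 by (intro Least_le) auto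
  have l3: "(LEAST j. 1 \<le> j \<and> x 3 j \<noteq> 0) \<le> m - b" using c3 bm by (intro Least_le) auto
  define s where "s = (\<Sum>i\<in>{1,2,3::nat}. LEAST j. 1 \<le> j \<and> x i j \<noteq> 0)"
  have s_eq: "s = (LEAST j. 1 \<le> j \<and> x 1 j \<noteq> 0) + ((LEAST j. 1 \<le> j \<and> x 2 j \<noteq> 0) + (LEAST j. 1 \<le> j \<and> x 3 j \<noteq> 0))"
    unfolding s_def by simp
  have "nat v \<le> D + 1 + b - a" using vle v1 ab by linarith
  hence sle: "s \<le> m + D + 2" using s_eq l1 l2 l3 ab bm by linarith
  have nz: "\<not> (\<exists>i\<in>{1,2,3::nat}. \<forall>j\<ge>1. x i j = 0)"
  proof -
    have "1 \<le> nat v" "1 \<le> m - b" using v1 bm by auto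
    then show ?thesis using c1 c2 c3 by (metis empty_iff insert_iff le_add2)
  qed
  have pn: "p_norm p x = 1 / real p ^ s"
    unfolding p_norm_def s_def by (rule if_not_P[OF nz])
  have "1 / real p ^ (m + D + 3) < 1 / real p ^ (m + D + 2)"
  proof -
    have "real p ^ (m + D + 2) < real p ^ (m + D + 3)" using p2 by (intro power_strict_increasing) auto
    moreover have "0 < real p ^ (m + D + 2)" using p2 by simp
    ultimately show ?thesis using p2 by (intro divide_strict_left_mono mult_pos_pos) auto
  qed
  also have "\<dots> \<le> 1 / real p ^ s"
    using p2 sle by (intro divide_left_mono power_increasing) auto
  finally show ?thesis using pn unfolding x_def p_def by simp
qed

theorem lemma6:
  fixes \<theta> :: "'p::prime_card mod_ring fls" and D m :: nat
  assumes "XadicLC_counterexample \<theta>"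
    and "deficiency_bound \<theta> D"
    and "m > D"
  shows "Min {p_norm CARD('p) (digit_ominus (net_point m \<theta> k) (net_point m \<theta> n)) | k n.
                k < n \<and> n < CARD('p) ^ m}
         > 1 / real CARD('p) ^ (m + D + 3)"
proof -
  define F where "F k n = p_norm CARD('p) (digit_ominus (net_point m \<theta> k) (net_point m \<theta> n))" for k n
  define S where "S = {F k n | k n. k < n \<and> n < CARD('p) ^ m}"
  have "S \<subseteq> (\<lambda>(k, n). F k n) ` ({..<CARD('p) ^ m} \<times> {..<CARD('p) ^ m})"
    unfolding S_def by force
  hence fin: "finite S" by (rule finite_subset) auto
  have p2: "CARD('p) \<ge> 2" using prime_card[where 'a='p] prime_ge_2_nat by blast
  have "CARD('p) ^ 1 \<le> CARD('p) ^ m" using assms(3) p2 by (intro power_increasing) auto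
  hence "1 < CARD('p) ^ m" using p2 by simp
  hence ne: "S \<noteq> {}" unfolding S_def by blast
  have "\<forall>s\<in>S. 1 / real CARD('p) ^ (m + D + 3) < s"
    unfolding S_def F_def using pair_bound[OF assms(1,2)] by blast
  then show ?thesis using Min_gr_iff[OF fin ne] unfolding S_def F_def by blast
qed

end
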